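(* Let $P_1,P_2$ be quantum programs with finite-dimensional state Hilbert spaces $\mathcal{H}_{P_1},\mathcal{H}_{P_2}$, $d_i=\dim\mathcal{H}_{P_i}$, with denotational semantics $\llbracket P_i\rrbracket$. Let $\mathcal{M}_1=\{M_{10},M_{11}\}$ and $\mathcal{M}_2=\{M_{20},M_{21}\}$ be two-outcome measurements on $\mathcal{H}_{P_1}$ and $\mathcal{H}_{P_2}$ respectively, and set $\mathcal{E}_{ij}(X)=M_{ij}XM_{ij}^\dagger$. Let $\rho\in\mathcal{D}^\le(\mathcal{H}_{P_1}\otimes\mathcal{H}_{P_2})$. If $$\mathrm{tr}\big[\mathcal{E}_{10}\circ(\llbracket P_1\rrbracket\circ\mathcal{E}_{11})^n(\mathrm{tr}_{2}(\rho))\big]=\mathrm{tr}\big[\mathcal{E}_{20}\circ(\llbracket P_2\rrbracket\circ\mathcal{E}_{21})^n(\mathrm{tr}_{1}(\rho))\big]$$ holds for every $0\le n\le d_1^2+d_2^2-1$, then it holds for every $n\ge 0$.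
   Context: A quantum program $P$ acts on the tensor product $\mathcal{H}_P$ of the state spaces of its quantum variables; its denotational semantics $\llbracket P\rrbracket$ is a linear map (quantum operation: completely positive, trace non-increasing) on operators on $\mathcal{H}_P$. A (projective) measurement $\{M_m\}$ is a family of operators with $\sum_m M_m^\dagger M_m=I$. $\mathcal{D}^\le(\mathcal{H})$ denotes partial density operators on $\mathcal{H}$; $\mathrm{tr}_1,\mathrm{tr}_2$ denote partial traces over the first and second tensor factor, so $\mathrm{tr}_2(\rho)$ lives on $\mathcal{H}_{P_1}$ and $\mathrm{tr}_1(\rho)$ on $\mathcal{H}_{P_2}$. *)

theory Defs
  imports "Jordan_Normal_Form.Matrix"
begin

text \<open>The tensor product C^d1 (x) C^d2 is identified with C^(d1*d2)
via the basis index (i,j) |-> i*d2 + j (first factor most significant).\<close>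

definition dagger :: "complex mat \<Rightarrow> complex mat" where
  "dagger A = mat (dim_col A) (dim_row A) (\<lambda>(i,j). cnj (A $$ (j,i)))"

definition mtrace :: "complex mat \<Rightarrow> complex" where
  "mtrace A = (\<Sum>i<dim_row A. A $$ (i,i))"

definition psd :: "nat \<Rightarrow> complex mat \<Rightarrow> bool" where
  "psd d A \<longleftrightarrow> A \<in> carrier_mat d d \<and>
     (\<forall>v \<in> carrier_vec d. (\<Sum>i<d. cnj (v $ i) * (A *\<^sub>v v) $ i) \<in> \<real> \<and>
                           Re (\<Sum>i<d. cnj (v $ i) * (A *\<^sub>v v) $ i) \<ge> 0)"

definition pdo :: "nat \<Rightarrow> complex mat \<Rightarrow> bool" where
  "pdo d \<rho> \<longleftrightarrow> psd d \<rho> \<and> Re (mtrace \<rho>) \<le> 1"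

definition ptrace2 :: "nat \<Rightarrow> nat \<Rightarrow> complex mat \<Rightarrow> complex mat" where
  "ptrace2 d1 d2 \<rho> = mat d1 d1 (\<lambda>(i,i'). \<Sum>j<d2. \<rho> $$ (i*d2 + j, i'*d2 + j))"

definition ptrace1 :: "nat \<Rightarrow> nat \<Rightarrow> complex mat \<Rightarrow> complex mat" where
  "ptrace1 d1 d2 \<rho> = mat d2 d2 (\<lambda>(j,j'). \<Sum>i<d1. \<rho> $$ (i*d2 + j, i*d2 + j'))"

text \<open>(id_k (x) E) applied to an operator Y on C^k (x) C^d, acting blockwise.\<close>
definition ext_id :: "nat \<Rightarrow> nat \<Rightarrow> (complex mat \<Rightarrow> complex mat) \<Rightarrow> complex mat \<Rightarrow> complex mat" where
  "ext_id k d E Y = mat (k*d) (k*d) (\<lambda>(i,j).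
      E (mat d d (\<lambda>(p,q). Y $$ ((i div d)*d + p, (j div d)*d + q))) $$ (i mod d, j mod d))"

definition quantum_operation :: "nat \<Rightarrow> (complex mat \<Rightarrow> complex mat) \<Rightarrow> bool" where
  "quantum_operation d E \<longleftrightarrow>
     (\<forall>X \<in> carrier_mat d d. E X \<in> carrier_mat d d) \<and>
     (\<forall>X \<in> carrier_mat d d. \<forall>Y \<in> carrier_mat d d. E (X + Y) = E X + E Y) \<and>
     (\<forall>X \<in> carrier_mat d d. \<forall>c. E (c \<cdot>\<^sub>m X) = c \<cdot>\<^sub>m E X) \<and>
     (\<forall>k Y. psd (k*d) Y \<longrightarrow> psd (k*d) (ext_id k d E Y)) \<and>
     (\<forall>\<rho>. psd d \<rho> \<longrightarrow> Re (mtrace (E \<rho>)) \<le> Re (mtrace \<rho>))"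

definition measurement2 :: "nat \<Rightarrow> complex mat \<Rightarrow> complex mat \<Rightarrow> bool" where
  "measurement2 d M0 M1 \<longleftrightarrow> M0 \<in> carrier_mat d d \<and> M1 \<in> carrier_mat d d \<and>
     dagger M0 * M0 + dagger M1 * M1 = 1\<^sub>m d"

definition sop :: "complex mat \<Rightarrow> complex mat \<Rightarrow> complex mat" where
  "sop M X = M * X * dagger M"

end

theory Submission
  imports Defs "Jordan_Normal_Form.Determinant"
begin

definition lin :: "nat \<Rightarrow> (complex mat \<Rightarrow> complex mat) \<Rightarrow> bool" where
  "lin d T \<longleftrightarrow> (\<forall>X \<in> carrier_mat d d. T X \<in> carrier_mat d d) \<and>
     (\<forall>X \<in> carrier_mat d d. \<forall>Y \<in> carrier_mat d d. T (X + Y) = T X + T Y) \<and>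
     (\<forall>X \<in> carrier_mat d d. \<forall>c. T (c \<cdot>\<^sub>m X) = c \<cdot>\<^sub>m T X)"

fun msum :: "nat \<Rightarrow> (nat \<Rightarrow> complex mat) \<Rightarrow> nat \<Rightarrow> complex mat" where
  "msum d f 0 = 0\<^sub>m d d"
| "msum d f (Suc m) = msum d f m + f m"

lemma msum_carrier: "(\<And>k. k < m \<Longrightarrow> f k \<in> carrier_mat d d) \<Longrightarrow> msum d f m \<in> carrier_mat d d"
  by (induction m) auto

lemma msum_index: "(\<And>k. k < m \<Longrightarrow> f k \<in> carrier_mat d d) \<Longrightarrow> a < d \<Longrightarrow> b < d \<Longrightarrow>
   msum d f m $$ (a,b) = (\<Sum>k<m. f k $$ (a,b))"
proof (induction m)
  case 0 then show ?case by simp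
next
  case (Suc m)
  have c: "msum d f m \<in> carrier_mat d d" using Suc.prems by (intro msum_carrier) auto
  have fm: "f m \<in> carrier_mat d d" using Suc.prems by auto
  have ab: "a < d" "b < d" using Suc.prems by auto
  have "(msum d f m + f m) $$ (a,b) = msum d f m $$ (a,b) + f m $$ (a,b)"
    using fm ab by (intro index_add_mat(1)) auto
  moreover have "msum d f m $$ (a,b) = (\<Sum>k<m. f k $$ (a,b))" using Suc by auto
  ultimately show ?case by simp
qed

lemma lin_id: "lin d id" unfolding lin_def by auto

lemma lin_comp: "lin d S \<Longrightarrow> lin d T \<Longrightarrow> lin d (S \<circ> T)"
  unfolding lin_def by auto

lemma lin_pow: "lin d T \<Longrightarrow> lin d (T ^^ j)"
  by (induction j) (auto intro: lin_comp lin_id)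

lemma lin_zero: assumes "lin d T" shows "T (0\<^sub>m d d) = 0\<^sub>m d d"
proof -
  have z: "0\<^sub>m d d = (0::complex) \<cdot>\<^sub>m 0\<^sub>m d d" by (rule eq_matI) auto
  have "T (0\<^sub>m d d) = 0 \<cdot>\<^sub>m T (0\<^sub>m d d)" using assms unfolding lin_def
    by (metis z zero_carrier_mat)
  moreover have "T (0\<^sub>m d d) \<in> carrier_mat d d" using assms unfolding lin_def by auto
  ultimately show ?thesis by (metis (no_types, lifting) carrier_matD(1,2) eq_matI index_smult_mat(1,2,3) index_zero_mat(1,2,3) mult_zero_left)
qed

lemma lin_msum: assumes "lin d T" "\<And>k. k < m \<Longrightarrow> f k \<in> carrier_mat d d"
  shows "T (msum d f m) = msum d (T \<circ> f) m"
  using assms(2)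
proof (induction m)
  case 0 then show ?case using lin_zero[OF assms(1)] by simp
next
  case (Suc m)
  have c: "msum d f m \<in> carrier_mat d d" using Suc.prems by (intro msum_carrier) auto
  have fm: "f m \<in> carrier_mat d d" using Suc.prems by auto
  show ?case using Suc c fm assms(1) unfolding lin_def by simp
qed

lemma dagger_carrier: "M \<in> carrier_mat d d \<Longrightarrow> dagger M \<in> carrier_mat d d"
  unfolding dagger_def by auto

lemma lin_sop: assumes M: "M \<in> carrier_mat d d" shows "lin d (sop M)"
proof -
  have D: "dagger M \<in> carrier_mat d d" by (rule dagger_carrier[OF M])
  show ?thesis unfolding lin_def sop_def
  proof (intro conjI ballI allI)
    fix X :: "complex mat" assume X: "X \<in> carrier_mat d d"
    show "M * X * dagger M \<in> carrier_mat d d" using M X D by auto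
    fix c :: complex
    show "M * (c \<cdot>\<^sub>m X) * dagger M = c \<cdot>\<^sub>m (M * X * dagger M)"
      using M X D by (simp add: mult_smult_distrib mult_smult_assoc_mat[of _ d d _ d])
  next
    fix X Y :: "complex mat" assume X: "X \<in> carrier_mat d d" and Y: "Y \<in> carrier_mat d d"
    show "M * (X + Y) * dagger M = M * X * dagger M + M * Y * dagger M"
      using M X D Y by (simp add: mult_add_distrib_mat[of _ d d] add_mult_distrib_mat[of _ d d])
  qed
qed

lemma mtrace_add: "A \<in> carrier_mat d d \<Longrightarrow> B \<in> carrier_mat d d \<Longrightarrow> mtrace (A + B) = mtrace A + mtrace B"
  unfolding mtrace_def by (auto simp: sum.distrib)

lemma mtrace_smult: "A \<in> carrier_mat d d \<Longrightarrow> mtrace (c \<cdot>\<^sub>m A) = c * mtrace A"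
  unfolding mtrace_def by (auto simp: sum_distrib_left)

lemma mtrace_zero: "mtrace (0\<^sub>m d d) = 0"
  unfolding mtrace_def by auto

lemma h_msum: assumes M: "M \<in> carrier_mat d d" and f: "\<And>k. k < m \<Longrightarrow> f k \<in> carrier_mat d d"
  shows "mtrace (sop M (msum d (\<lambda>k. c k \<cdot>\<^sub>m f k) m)) = (\<Sum>k<m. c k * mtrace (sop M (f k)))"
  using f
proof (induction m)
  case 0 then show ?case using lin_zero[OF lin_sop[OF M]] mtrace_zero by simp
next
  case (Suc m)
  have L: "lin d (sop M)" by (rule lin_sop[OF M])
  have c: "msum d (\<lambda>k. c k \<cdot>\<^sub>m f k) m \<in> carrier_mat d d" using Suc.prems by (intro msum_carrier) auto
  have fm: "f m \<in> carrier_mat d d" using Suc.prems by auto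
  have "sop M (msum d (\<lambda>k. c k \<cdot>\<^sub>m f k) (Suc m)) = sop M (msum d (\<lambda>k. c k \<cdot>\<^sub>m f k) m) + c m \<cdot>\<^sub>m sop M (f m)"
    using L c fm unfolding lin_def by simp
  moreover have "sop M (msum d (\<lambda>k. c k \<cdot>\<^sub>m f k) m) \<in> carrier_mat d d" "sop M (f m) \<in> carrier_mat d d"
    using L c fm unfolding lin_def by auto
  ultimately show ?case using Suc by (simp add: mtrace_add mtrace_smult)
qed

lemma msum_cong: "(\<And>k. k < m \<Longrightarrow> f k = g k) \<Longrightarrow> msum d f m = msum d g m"
  by (induction m) auto

lemma lin_pow_carrier: "lin d T \<Longrightarrow> \<sigma> \<in> carrier_mat d d \<Longrightarrow> (T ^^ k) \<sigma> \<in> carrier_mat d d"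
  using lin_pow[of d T k] unfolding lin_def by auto

lemma propagate:
  assumes L: "lin d T" and s: "\<sigma> \<in> carrier_mat d d"
    and hm: "(T ^^ m) \<sigma> = msum d (\<lambda>k. c k \<cdot>\<^sub>m (T ^^ k) \<sigma>) m"
  shows "(T ^^ (m + j)) \<sigma> = msum d (\<lambda>k. c k \<cdot>\<^sub>m (T ^^ (k + j)) \<sigma>) m"
proof -
  have Lj: "lin d (T ^^ j)" by (rule lin_pow[OF L])
  have C: "\<And>k. (T ^^ k) \<sigma> \<in> carrier_mat d d" using lin_pow_carrier[OF L s] by auto
  have "(T ^^ (m + j)) \<sigma> = (T ^^ j) ((T ^^ m) \<sigma>)" by (simp add: funpow_add add.commute[of m j])
  also have "\<dots> = msum d ((T ^^ j) \<circ> (\<lambda>k. c k \<cdot>\<^sub>m (T ^^ k) \<sigma>)) m"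
    unfolding hm using C by (intro lin_msum[OF Lj]) auto
  also have "\<dots> = msum d (\<lambda>k. c k \<cdot>\<^sub>m (T ^^ (k + j)) \<sigma>) m"
  proof (rule msum_cong)
    fix k
    have "(T ^^ j) (c k \<cdot>\<^sub>m (T ^^ k) \<sigma>) = c k \<cdot>\<^sub>m (T ^^ j) ((T ^^ k) \<sigma>)"
      using Lj C unfolding lin_def by auto
    also have "(T ^^ j) ((T ^^ k) \<sigma>) = (T ^^ (k + j)) \<sigma>" by (simp add: funpow_add add.commute[of k j])
    finally show "((T ^^ j) \<circ> (\<lambda>k. c k \<cdot>\<^sub>m (T ^^ k) \<sigma>)) k = c k \<cdot>\<^sub>m (T ^^ (k + j)) \<sigma>" by simp
  qed
  finally show ?thesis .
qed

lemma dep_single: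
  assumes Z: "\<And>k. Z k \<in> carrier_mat d d"
    and sum0: "\<And>a b. a < d \<Longrightarrow> b < d \<Longrightarrow> (\<Sum>k<Suc D. Z k $$ (a,b) * v k) = 0"
    and m: "m \<le> D" "v m \<noteq> 0" "\<And>k. m < k \<Longrightarrow> k \<le> D \<Longrightarrow> v k = 0"
  shows "Z m = msum d (\<lambda>k. (- v k / v m) \<cdot>\<^sub>m Z k) m"
proof (rule eq_matI)
  have MC: "msum d (\<lambda>k. (- v k / v m) \<cdot>\<^sub>m Z k) m \<in> carrier_mat d d"
    using Z by (intro msum_carrier) auto
  show "dim_row (Z m) = dim_row (msum d (\<lambda>k. (- v k / v m) \<cdot>\<^sub>m Z k) m)"
       "dim_col (Z m) = dim_col (msum d (\<lambda>k. (- v k / v m) \<cdot>\<^sub>m Z k) m)"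
    using MC Z[of m] by auto
  fix a b assume a: "a < dim_row (msum d (\<lambda>k. (- v k / v m) \<cdot>\<^sub>m Z k) m)"
    and b: "b < dim_col (msum d (\<lambda>k. (- v k / v m) \<cdot>\<^sub>m Z k) m)"
  have ab: "a < d" "b < d" using a b MC by auto
  have "msum d (\<lambda>k. (- v k / v m) \<cdot>\<^sub>m Z k) m $$ (a,b) = (\<Sum>k<m. ((- v k / v m) \<cdot>\<^sub>m Z k) $$ (a,b))"
    using Z ab by (intro msum_index) auto
  also have "\<dots> = (\<Sum>k<m. (- v k / v m) * Z k $$ (a,b))"
  proof (intro sum.cong refl)
    fix k assume "k \<in> {..<m}"
    have "dim_row (Z k) = d" "dim_col (Z k) = d" using Z[of k] by auto
    then show "((- v k / v m) \<cdot>\<^sub>m Z k) $$ (a,b) = (- v k / v m) * Z k $$ (a,b)"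
      using ab by (intro index_smult_mat(1)) auto
  qed
  finally have R: "msum d (\<lambda>k. (- v k / v m) \<cdot>\<^sub>m Z k) m $$ (a,b) = (\<Sum>k<m. (- v k / v m) * Z k $$ (a,b))" .
  have "(\<Sum>k<Suc D. Z k $$ (a,b) * v k) = (\<Sum>k<Suc m. Z k $$ (a,b) * v k)"
    using m by (intro sum.mono_neutral_right) auto
  then have "(\<Sum>k<m. Z k $$ (a,b) * v k) + Z m $$ (a,b) * v m = 0" using sum0[OF ab] by simp
  then have "Z m $$ (a,b) * v m = - (\<Sum>k<m. Z k $$ (a,b) * v k)"
    by (simp add: eq_neg_iff_add_eq_0 add.commute)
  then have "Z m $$ (a,b) = - (\<Sum>k<m. Z k $$ (a,b) * v k) / v m" using m(2)
    by (metis nonzero_mult_div_cancel_right divide_minus_left)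
  also have "\<dots> = (\<Sum>k<m. (- v k / v m) * Z k $$ (a,b))"
    by (simp add: sum_divide_distrib sum_negf[symmetric] mult.commute)
  finally show "Z m $$ (a,b) = msum d (\<lambda>k. (- v k / v m) \<cdot>\<^sub>m Z k) m $$ (a,b)" using R by simp
qed


lemma idx_lt: "a < (d::nat) \<Longrightarrow> b < d \<Longrightarrow> a * d + b < d * d"
proof -
  assume "a < d" "b < d"
  then have "a * d + b < a * d + d" by simp
  also have "\<dots> = Suc a * d" by simp
  also have "\<dots> \<le> d * d" using \<open>a < d\<close> by (intro mult_le_mono1) simp
  finally show ?thesis .
qed

lemma qo_lin: "quantum_operation d P \<Longrightarrow> lin d P"
  unfolding quantum_operation_def lin_def by blast

theorem lemma5p5:
  fixes d1 d2 :: nat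
    and P1 P2 :: "complex mat \<Rightarrow> complex mat"
    and M10 M11 M20 M21 \<rho> :: "complex mat"
  assumes "quantum_operation d1 P1"
    and "quantum_operation d2 P2"
    and "measurement2 d1 M10 M11"
    and "measurement2 d2 M20 M21"
    and "pdo (d1 * d2) \<rho>"
    and "\<forall>n \<le> d1^2 + d2^2 - 1.
           mtrace (sop M10 (((P1 \<circ> sop M11) ^^ n) (ptrace2 d1 d2 \<rho>))) =
           mtrace (sop M20 (((P2 \<circ> sop M21) ^^ n) (ptrace1 d1 d2 \<rho>)))"
  shows "\<forall>n.
           mtrace (sop M10 (((P1 \<circ> sop M11) ^^ n) (ptrace2 d1 d2 \<rho>))) =
           mtrace (sop M20 (((P2 \<circ> sop M21) ^^ n) (ptrace1 d1 d2 \<rho>)))"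
proof -
  define T1 where "T1 = P1 \<circ> sop M11"
  define T2 where "T2 = P2 \<circ> sop M21"
  define s1 where "s1 = ptrace2 d1 d2 \<rho>"
  define s2 where "s2 = ptrace1 d1 d2 \<rho>"
  define X where "X = (\<lambda>k. (T1 ^^ k) s1)"
  define Y where "Y = (\<lambda>k. (T2 ^^ k) s2)"
  define D where "D = d1 * d1 + d2 * d2"
  have M: "M10 \<in> carrier_mat d1 d1" "M11 \<in> carrier_mat d1 d1"
          "M20 \<in> carrier_mat d2 d2" "M21 \<in> carrier_mat d2 d2"
    using assms(3,4) unfolding measurement2_def by auto
  have L1: "lin d1 T1" unfolding T1_def using qo_lin[OF assms(1)] lin_sop[OF M(2)] by (rule lin_comp)
  have L2: "lin d2 T2" unfolding T2_def using qo_lin[OF assms(2)] lin_sop[OF M(4)] by (rule lin_comp)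
  have S1: "s1 \<in> carrier_mat d1 d1" unfolding s1_def ptrace2_def by auto
  have S2: "s2 \<in> carrier_mat d2 d2" unfolding s2_def ptrace1_def by auto
  have XC: "\<And>k. X k \<in> carrier_mat d1 d1" unfolding X_def by (rule lin_pow_carrier[OF L1 S1])
  have YC: "\<And>k. Y k \<in> carrier_mat d2 d2" unfolding Y_def by (rule lin_pow_carrier[OF L2 S2])
  define coord where "coord = (\<lambda>i k. if i < d1 * d1 then X k $$ (i div d1, i mod d1)
      else Y k $$ ((i - d1 * d1) div d2, (i - d1 * d1) mod d2))"
  define A where "A = mat\<^sub>r (Suc D) (Suc D) (\<lambda>i. if i = D then 0\<^sub>v (Suc D) else vec (Suc D) (coord i))"
  have AC: "A \<in> carrier_mat (Suc D) (Suc D)" unfolding A_def by auto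
  have "det A = 0" unfolding A_def by (rule det_row_0) auto
  then obtain v where v: "v \<in> carrier_vec (Suc D)" "v \<noteq> 0\<^sub>v (Suc D)" "A *\<^sub>v v = 0\<^sub>v (Suc D)"
    using det_0_iff_vec_prod_zero_field[OF AC] by blast
  have rows: "(\<Sum>k<Suc D. coord i k * v $ k) = 0" if i: "i < D" for i
  proof -
    have "(A *\<^sub>v v) $ i = 0" using v(3) i by simp
    moreover have "(A *\<^sub>v v) $ i = row A i \<bullet> v" using AC i by simp
    moreover have "row A i = vec (Suc D) (coord i)" unfolding A_def using i by simp
    ultimately show ?thesis using v(1) unfolding scalar_prod_def by (simp add: lessThan_atLeast0)
  qed
  obtain k0 where k0: "k0 \<le> D" "v $ k0 \<noteq> 0"
  proof -
    have "\<exists>k<Suc D. v $ k \<noteq> 0"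
    proof (rule ccontr)
      assume "\<not> ?thesis"
      then have "v = 0\<^sub>v (Suc D)" using v(1) by (intro eq_vecI) auto
      then show False using v(2) by simp
    qed
    then show ?thesis using that by (auto simp: less_Suc_eq_le)
  qed
  define m where "m = (GREATEST k. k \<le> D \<and> v $ k \<noteq> 0)"
  have m: "m \<le> D" "v $ m \<noteq> 0"
    using GreatestI_nat[of "\<lambda>k. k \<le> D \<and> v $ k \<noteq> 0" k0 D] k0 unfolding m_def by auto
  have mz: "v $ k = 0" if "m < k" "k \<le> D" for k
    using Greatest_le_nat[of "\<lambda>k. k \<le> D \<and> v $ k \<noteq> 0" k D] that unfolding m_def by force
  define c where "c = (\<lambda>k. - (v $ k) / v $ m)"
  have Xm: "X m = msum d1 (\<lambda>k. c k \<cdot>\<^sub>m X k) m"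
    unfolding c_def
  proof (rule dep_single[where v="\<lambda>k. v $ k", OF XC _ m mz])
    fix a b assume ab: "a < d1" "b < d1"
    have i: "a * d1 + b < d1 * d1" by (rule idx_lt[OF ab])
    then have "a * d1 + b < D" unfolding D_def by simp
    from rows[OF this] show "(\<Sum>k<Suc D. X k $$ (a, b) * v $ k) = 0"
      unfolding coord_def using i ab by simp
  qed
  have Ym: "Y m = msum d2 (\<lambda>k. c k \<cdot>\<^sub>m Y k) m"
    unfolding c_def
  proof (rule dep_single[where v="\<lambda>k. v $ k", OF YC _ m mz])
    fix a b assume ab: "a < d2" "b < d2"
    have i: "a * d2 + b < d2 * d2" by (rule idx_lt[OF ab])
    then have "d1 * d1 + (a * d2 + b) < D" unfolding D_def by simp
    from rows[OF this] show "(\<Sum>k<Suc D. Y k $$ (a, b) * v $ k) = 0"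
      unfolding coord_def using i ab by simp
  qed
  define g where "g = (\<lambda>n. mtrace (sop M10 (X n)) - mtrace (sop M20 (Y n)))"
  have rec: "g (m + j) = (\<Sum>k<m. c k * g (k + j))" for j
  proof -
    have "X (m + j) = msum d1 (\<lambda>k. c k \<cdot>\<^sub>m X (k + j)) m"
      using propagate[OF L1 S1, of m c j] Xm unfolding X_def by simp
    then have 1: "mtrace (sop M10 (X (m + j))) = (\<Sum>k<m. c k * mtrace (sop M10 (X (k + j))))"
      using h_msum[OF M(1), of m "\<lambda>k. X (k + j)" c] XC by simp
    have "Y (m + j) = msum d2 (\<lambda>k. c k \<cdot>\<^sub>m Y (k + j)) m"
      using propagate[OF L2 S2, of m c j] Ym unfolding Y_def by simp
    then have 2: "mtrace (sop M20 (Y (m + j))) = (\<Sum>k<m. c k * mtrace (sop M20 (Y (k + j))))"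
      using h_msum[OF M(3), of m "\<lambda>k. Y (k + j)" c] YC by simp
    show ?thesis unfolding g_def 1 2 by (simp add: sum_subtractf right_diff_distrib)
  qed
  have base: "g n = 0" if "n < D" for n
  proof -
    have "n \<le> d1^2 + d2^2 - 1" using that unfolding D_def by (simp add: power2_eq_square)
    then show ?thesis using assms(6) unfolding g_def X_def Y_def T1_def T2_def s1_def s2_def by simp
  qed
  have "g n = 0" for n
  proof (induction n rule: less_induct)
    case (less n)
    show ?case
    proof (cases "n < m")
      case True then show ?thesis using base m(1) by simp
    next
      case False
      then obtain j where j: "n = m + j" by (metis le_add_diff_inverse not_less)
      have "g n = (\<Sum>k<m. c k * g (k + j))" unfolding j by (rule rec)
      also have "\<dots> = 0" using less j by (intro sum.neutral) auto
      finally show ?thesis .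
    qed
  qed
  then show ?thesis unfolding g_def X_def Y_def T1_def T2_def s1_def s2_def by simp
qed

end
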